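(* Any quantum algorithm that, with probability at least $\frac{2}{3}$, outputs the LZ77 factorization of every input text $T[1..n]$ in the class of texts with $z=\Theta(1)$ (respectively, with $z=\Theta(n)$) LZ77 factors requires $\Omega(\sqrt{zn})$ input queries. Likewise, any quantum algorithm that, with probability at least $\frac{2}{3}$, outputs the run-length encoded BWT of every input text in the class of texts with $r=\Theta(1)$ (respectively, $r=\Theta(n)$) BWT runs requires $\Omega(\sqrt{rn})$ input queries.
   Context: Model: the text $T[1..n]$ over an integer alphabet is accessible only through a quantum oracle which on query $i$ returns $T[i]$; the query complexity is the number of oracle calls. LZ77 factorization (greedy): start with $i=1$; while $i\le n$: if $T[i]$ is the first occurrence of its symbol, $T[i]$ is the next factor and $i\gets i+1$; otherwise take the largest $j\ge i$ such that $T[i..j]$ occurs in $T$ starting at some position $i'<i$, make $T[i..j]$ the next factor and set $i\gets j+1$. $z$ is the number of factors. BWT: with $\mathrm{SA}$ the suffix array of $T$ (so $T[\mathrm{SA}[i]..n]$ is the $i$-th smallest suffix lexicographically), $\mathrm{BWT}[i]=T[\mathrm{SA}[i]-1]$ (with $T[0]=T[n]$), equivalently the last column of the matrix of lexicographically sorted cyclic rotations of $T$. $r$ is the number of maximal runs of equal symbols in $\mathrm{BWT}$; the run-length encoded BWT lists these runs as (symbol, length) pairs. *)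

theory Defs
  imports Complex_Main "HOL-Library.List_Lexorder"
begin

text \<open>Texts are lists of naturals, 0-based: T[1..n] of the paper is the list T with T ! (i-1) = T[i].\<close>

definition texts :: "nat \<Rightarrow> nat \<Rightarrow> nat list set" where
  "texts \<sigma> n = {T. length T = n \<and> set T \<subseteq> {0..<\<sigma>}}"

definition lz_len :: "nat list \<Rightarrow> nat \<Rightarrow> nat" where
  "lz_len T i = (if T ! i \<notin> set (take i T) then 1
     else (GREATEST l. 1 \<le> l \<and> i + l \<le> length T \<and>
             (\<exists>i' < i. i' + l \<le> length T \<and> take l (drop i' T) = take l (drop i T))))"

fun lz_aux :: "nat \<Rightarrow> nat list \<Rightarrow> nat \<Rightarrow> nat list list" where
  "lz_aux 0 T i = []"
| "lz_aux (Suc k) T i = (if length T \<le> i then []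
     else (let l = max 1 (lz_len T i) in take l (drop i T) # lz_aux k T (i + l)))"

definition lz77 :: "nat list \<Rightarrow> nat list list" where
  "lz77 T = lz_aux (length T) T 0"

definition lz_z :: "nat list \<Rightarrow> nat" where
  "lz_z T = length (lz77 T)"

text \<open>Suffixes sorted lexicographically (list order of List_Lexorder, a proper prefix is smaller);
  the suffix of length s starts at 0-based position n - s; BWT[i] = T[SA[i]-1] with T[0] = T[n].\<close>
definition bwt :: "nat list \<Rightarrow> nat list" where
  "bwt T = (let n = length T in
     map (\<lambda>s. let p = n - length s in if p = 0 then T ! (n - 1) else T ! (p - 1))
         (sort (map (\<lambda>i. drop i T) [0..<n])))"

fun rle :: "nat list \<Rightarrow> (nat \<times> nat) list" where
  "rle [] = []"
| "rle (x # xs) = (case rle xs of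
       [] \<Rightarrow> [(x, 1)]
     | (y, k) # rs \<Rightarrow> (if x = y then (y, Suc k) # rs else (x, 1) # (y, k) # rs))"

definition rlbwt :: "nat list \<Rightarrow> (nat \<times> nat) list" where
  "rlbwt T = rle (bwt T)"

definition bwt_r :: "nat list \<Rightarrow> nat" where
  "bwt_r T = length (rlbwt T)"

text \<open>Computational basis states |i, b, w\<rangle>: query index i < n, answer register b < \<sigma>,
  workspace w < d.  Operators are matrices indexed by basis states.\<close>

type_synonym bstate = "nat \<times> nat \<times> nat"
type_synonym qvec = "bstate \<Rightarrow> complex"
type_synonym qop = "bstate \<Rightarrow> bstate \<Rightarrow> complex"

definition basis :: "nat \<Rightarrow> nat \<Rightarrow> nat \<Rightarrow> bstate set" where
  "basis n \<sigma> d = {0..<n} \<times> {0..<\<sigma>} \<times> {0..<d}"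

definition apply_op :: "bstate set \<Rightarrow> qop \<Rightarrow> qvec \<Rightarrow> qvec" where
  "apply_op B U v = (\<lambda>x. if x \<in> B then (\<Sum>y\<in>B. U x y * v y) else 0)"

definition is_unitary :: "bstate set \<Rightarrow> qop \<Rightarrow> bool" where
  "is_unitary B U = (\<forall>x\<in>B. \<forall>x'\<in>B.
      (\<Sum>y\<in>B. cnj (U y x) * U y x') = (if x = x' then 1 else 0))"

text \<open>Standard query operator O_T |i, b, w\<rangle> = |i, (b + T[i]) mod \<sigma>, w\<rangle>.\<close>
definition query_op :: "nat \<Rightarrow> nat list \<Rightarrow> qvec \<Rightarrow> qvec" where
  "query_op \<sigma> T v = (\<lambda>(i, b, w).
      if i < length T \<and> b < \<sigma> then v (i, (b + \<sigma> - T ! i mod \<sigma>) mod \<sigma>, w) else 0)"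

record 'o qalg =
  wdim :: nat
  nqueries :: nat
  unitaries :: "nat \<Rightarrow> qop"
  outp :: "bstate \<Rightarrow> 'o"

definition valid_qalg :: "nat \<Rightarrow> nat \<Rightarrow> 'o qalg \<Rightarrow> bool" where
  "valid_qalg n \<sigma> A = (1 \<le> wdim A \<and>
     (\<forall>k \<le> nqueries A. is_unitary (basis n \<sigma> (wdim A)) (unitaries A k)))"

definition init_state :: qvec where
  "init_state = (\<lambda>x. if x = (0, 0, 0) then 1 else 0)"

fun run_state :: "nat \<Rightarrow> nat \<Rightarrow> 'o qalg \<Rightarrow> nat list \<Rightarrow> nat \<Rightarrow> qvec" where
  "run_state n \<sigma> A T 0 = apply_op (basis n \<sigma> (wdim A)) (unitaries A 0) init_state"
| "run_state n \<sigma> A T (Suc k) =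
     apply_op (basis n \<sigma> (wdim A)) (unitaries A (Suc k)) (query_op \<sigma> T (run_state n \<sigma> A T k))"

definition final_state :: "nat \<Rightarrow> nat \<Rightarrow> 'o qalg \<Rightarrow> nat list \<Rightarrow> qvec" where
  "final_state n \<sigma> A T = run_state n \<sigma> A T (nqueries A)"

definition prob_output :: "nat \<Rightarrow> nat \<Rightarrow> 'o qalg \<Rightarrow> nat list \<Rightarrow> 'o \<Rightarrow> real" where
  "prob_output n \<sigma> A T out =
     (\<Sum>x\<in>basis n \<sigma> (wdim A) \<inter> {x. outp A x = out}. (cmod (final_state n \<sigma> A T x))\<^sup>2)"

definition computes :: "nat \<Rightarrow> nat \<Rightarrow> 'o qalg \<Rightarrow> (nat list \<Rightarrow> 'o) \<Rightarrow> nat list set \<Rightarrow> bool" where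
  "computes n \<sigma> A f S = (valid_qalg n \<sigma> A \<and> (\<forall>T\<in>S. prob_output n \<sigma> A T (f T) \<ge> 2/3))"

end

theory Submission
  imports Defs "HOL-Library.Multiset"
begin


definition inB :: "bstate set \<Rightarrow> qvec \<Rightarrow> qvec \<Rightarrow> complex" where
  "inB B a b = (\<Sum>x\<in>B. cnj (a x) * b x)"

definition nrm :: "bstate set \<Rightarrow> qvec \<Rightarrow> real" where
  "nrm B v = (\<Sum>x\<in>B. (cmod (v x))^2)"

definition Nq :: "nat \<Rightarrow> nat \<Rightarrow> qvec \<Rightarrow> nat \<Rightarrow> real" where
  "Nq \<sigma> d v i = (\<Sum>\<beta>\<in>{0..<\<sigma>}. \<Sum>\<omega>\<in>{0..<d}. (cmod (v (i,\<beta>,\<omega>)))^2)"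

lemma inB_self: "inB B v v = complex_of_real (nrm B v)"
  unfolding inB_def nrm_def by (simp add: complex_norm_square mult.commute del: of_real_power)

lemma unitary_inner:
  assumes "finite B" "is_unitary B U"
  shows "inB B (apply_op B U v) (apply_op B U w) = inB B v w"
proof -
  have "inB B (apply_op B U v) (apply_op B U w) =
     (\<Sum>x\<in>B. (\<Sum>y\<in>B. cnj (U x y) * cnj (v y)) * (\<Sum>y'\<in>B. U x y' * w y'))"
    unfolding inB_def apply_op_def by (intro sum.cong) auto
  also have "\<dots> = (\<Sum>x\<in>B. \<Sum>y\<in>B. \<Sum>y'\<in>B. cnj (v y) * w y' * (cnj (U x y) * U x y'))"
    unfolding sum_product by (intro sum.cong refl) (simp add: mult_ac)
  also have "\<dots> = (\<Sum>y\<in>B. \<Sum>x\<in>B. \<Sum>y'\<in>B. cnj (v y) * w y' * (cnj (U x y) * U x y'))"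
    by (rule sum.swap)
  also have "\<dots> = (\<Sum>y\<in>B. \<Sum>y'\<in>B. \<Sum>x\<in>B. cnj (v y) * w y' * (cnj (U x y) * U x y'))"
    by (rule sum.cong[OF refl]) (rule sum.swap)
  also have "\<dots> = (\<Sum>y\<in>B. \<Sum>y'\<in>B. cnj (v y) * w y' * (\<Sum>x\<in>B. cnj (U x y) * U x y'))"
    by (simp add: sum_distrib_left)
  also have "\<dots> = (\<Sum>y\<in>B. \<Sum>y'\<in>B. cnj (v y) * w y' * (if y = y' then 1 else 0))"
    using assms(2) unfolding is_unitary_def by (intro sum.cong refl) simp
  also have "\<dots> = (\<Sum>y\<in>B. \<Sum>y'\<in>B. (if y = y' then cnj (v y) * w y' else 0))"
    by (intro sum.cong refl) simp
  also have "\<dots> = inB B v w"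
    unfolding inB_def using assms(1) by (simp add: sum.delta)
  finally show ?thesis .
qed

lemma shift_inj:
  assumes "(a::nat) < s" "b < s" "(a + c) mod s = (b + c) mod s"
  shows "a = b"
proof -
  have "int a mod int s = int b mod int s"
  proof -
    have "(int a + int c) mod int s = (int b + int c) mod int s"
      using assms(3) by (metis of_nat_add zmod_int)
    hence "(int a + int c - int c) mod int s = (int b + int c - int c) mod int s"
      by (metis mod_diff_left_eq)
    thus ?thesis by simp
  qed
  thus ?thesis using assms(1,2) by (simp add: zmod_int)
qed

lemma shift_sum:
  assumes "0 < (s::nat)"
  shows "(\<Sum>\<beta>\<in>{0..<s}. g ((\<beta> + c) mod s)) = (\<Sum>\<beta>\<in>{0..<s}. (g \<beta> :: 'a::comm_monoid_add))"
proof -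
  let ?h = "\<lambda>\<beta>. (\<beta> + c) mod s"
  have inj: "inj_on ?h {0..<s}"
  proof (rule inj_onI)
    fix x y :: nat assume "x \<in> {0..<s}" "y \<in> {0..<s}" "?h x = ?h y"
    thus "x = y" using shift_inj[of x s y c] by simp
  qed
  have "?h ` {0..<s} = {0..<s}"
    by (rule endo_inj_surj) (use assms inj in auto)
  hence "(\<Sum>\<beta>\<in>{0..<s}. g \<beta>) = (\<Sum>\<beta>\<in>?h ` {0..<s}. g \<beta>)" by simp
  also have "\<dots> = (\<Sum>\<beta>\<in>{0..<s}. g (?h \<beta>))" by (rule sum.reindex[OF inj, unfolded comp_def])
  finally show ?thesis by simp
qed

lemma amgm: 
  fixes x y l :: real
  assumes "l > 0"
  shows "x * y \<le> (l * x^2 + y^2 / l) / 2"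
proof -
  have "0 \<le> (l * x - y)^2 / l" using assms by simp
  also have "(l * x - y)^2 / l = l * x^2 - 2 * (x * y) + y^2 / l"
    using assms by (simp add: power2_eq_square field_simps)
  finally show ?thesis by simp
qed

lemma cs_sum:
  fixes a b :: "'i \<Rightarrow> complex"
  assumes "l > 0"
  shows "cmod (\<Sum>x\<in>S. cnj (a x) * b x) \<le> (l * (\<Sum>x\<in>S. (cmod (a x))^2) + (\<Sum>x\<in>S. (cmod (b x))^2) / l) / 2"
proof -
  have "cmod (\<Sum>x\<in>S. cnj (a x) * b x) \<le> (\<Sum>x\<in>S. cmod (a x) * cmod (b x))"
    by (rule order_trans[OF norm_sum]) (simp add: norm_mult)
  also have "\<dots> \<le> (\<Sum>x\<in>S. (l * (cmod (a x))^2 + (cmod (b x))^2 / l) / 2)"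
    by (intro sum_mono amgm assms)
  also have "\<dots> = (\<Sum>x\<in>S. l * (cmod (a x))^2 + (cmod (b x))^2 / l) / 2"
    by (simp add: sum_divide_distrib)
  also have "\<dots> = (l * (\<Sum>x\<in>S. (cmod (a x))^2) + (\<Sum>x\<in>S. (cmod (b x))^2) / l) / 2"
    by (simp add: sum_divide_distrib sum_distrib_left sum.distrib)
  finally show ?thesis .
qed

lemma sum_basis:
  "(\<Sum>x\<in>basis n \<sigma> d. f x) = (\<Sum>i\<in>{0..<n}. \<Sum>\<beta>\<in>{0..<\<sigma>}. \<Sum>\<omega>\<in>{0..<d}. f (i,\<beta>,\<omega>))"
  unfolding basis_def by (simp add: sum.cartesian_product split_def)

lemma nrm_basis: "nrm (basis n \<sigma> d) v = (\<Sum>i\<in>{0..<n}. Nq \<sigma> d v i)"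
  unfolding nrm_def Nq_def by (rule sum_basis)

lemma Nq_nonneg: "0 \<le> Nq \<sigma> d v i"
  unfolding Nq_def by (intro sum_nonneg) auto

lemma cs_sum2:
  fixes a b :: "nat \<Rightarrow> nat \<Rightarrow> complex"
  assumes "l > 0"
  shows "cmod (\<Sum>\<beta>\<in>A. \<Sum>\<omega>\<in>C. cnj (a \<beta> \<omega>) * b \<beta> \<omega>) \<le>
    (l * (\<Sum>\<beta>\<in>A. \<Sum>\<omega>\<in>C. (cmod (a \<beta> \<omega>))^2) + (\<Sum>\<beta>\<in>A. \<Sum>\<omega>\<in>C. (cmod (b \<beta> \<omega>))^2) / l) / 2"
  using cs_sum[OF assms, of "\<lambda>(\<beta>,\<omega>). a \<beta> \<omega>" "\<lambda>(\<beta>,\<omega>). b \<beta> \<omega>" "A \<times> C"]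
  by (simp add: sum.cartesian_product split_def)

lemma query_diff:
  assumes "length T1 = n" "length T2 = n" "0 < \<sigma>" "0 < l"
  shows "cmod (inB (basis n \<sigma> d) (query_op \<sigma> T1 v) (query_op \<sigma> T2 w) - inB (basis n \<sigma> d) v w)
     \<le> (\<Sum>i\<in>{i\<in>{0..<n}. T1!i \<noteq> T2!i}. l * Nq \<sigma> d v i + Nq \<sigma> d w i / l)"
proof -
  define s1 where "s1 i \<beta> = (\<beta> + (\<sigma> - T1 ! i mod \<sigma>)) mod \<sigma>" for i \<beta>
  define s2 where "s2 i \<beta> = (\<beta> + (\<sigma> - T2 ! i mod \<sigma>)) mod \<sigma>" for i \<beta>
  define G where "G i = (\<Sum>\<beta>\<in>{0..<\<sigma>}. \<Sum>\<omega>\<in>{0..<d}. cnj (v (i, s1 i \<beta>, \<omega>)) * w (i, s2 i \<beta>, \<omega>))" for i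
  define H where "H i = (\<Sum>\<beta>\<in>{0..<\<sigma>}. \<Sum>\<omega>\<in>{0..<d}. cnj (v (i, \<beta>, \<omega>)) * w (i, \<beta>, \<omega>))" for i
  have e1: "inB (basis n \<sigma> d) (query_op \<sigma> T1 v) (query_op \<sigma> T2 w) = (\<Sum>i\<in>{0..<n}. G i)"
    unfolding inB_def sum_basis G_def s1_def s2_def query_op_def using assms
    by (intro sum.cong refl) (simp add: add.commute)
  have e2: "inB (basis n \<sigma> d) v w = (\<Sum>i\<in>{0..<n}. H i)"
    unfolding inB_def sum_basis H_def by simp
  have bnd: "cmod (G i - H i) \<le> (if T1!i \<noteq> T2!i then l * Nq \<sigma> d v i + Nq \<sigma> d w i / l else 0)" for i
  proof (cases "T1!i = T2!i")
    case True
    hence "s1 i = s2 i" unfolding s1_def s2_def by auto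
    hence "G i = (\<Sum>\<beta>\<in>{0..<\<sigma>}. (\<lambda>\<beta>. \<Sum>\<omega>\<in>{0..<d}. cnj (v (i, \<beta>, \<omega>)) * w (i, \<beta>, \<omega>)) (s1 i \<beta>))"
      unfolding G_def by simp
    also have "\<dots> = H i" unfolding s1_def H_def by (rule shift_sum[OF assms(3)])
    finally show ?thesis using True by simp
  next
    case False
    have n1: "(\<Sum>\<beta>\<in>{0..<\<sigma>}. \<Sum>\<omega>\<in>{0..<d}. (cmod (v (i, s1 i \<beta>, \<omega>)))^2) = Nq \<sigma> d v i"
      unfolding Nq_def s1_def using shift_sum[OF assms(3), of "\<lambda>\<beta>. \<Sum>\<omega>\<in>{0..<d}. (cmod (v (i, \<beta>, \<omega>)))^2" "\<sigma> - T1 ! i mod \<sigma>"] by simp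
    have n2: "(\<Sum>\<beta>\<in>{0..<\<sigma>}. \<Sum>\<omega>\<in>{0..<d}. (cmod (w (i, s2 i \<beta>, \<omega>)))^2) = Nq \<sigma> d w i"
      unfolding Nq_def s2_def using shift_sum[OF assms(3), of "\<lambda>\<beta>. \<Sum>\<omega>\<in>{0..<d}. (cmod (w (i, \<beta>, \<omega>)))^2" "\<sigma> - T2 ! i mod \<sigma>"] by simp
    have g: "cmod (G i) \<le> (l * Nq \<sigma> d v i + Nq \<sigma> d w i / l) / 2"
      using cs_sum2[OF assms(4), where a="\<lambda>\<beta> \<omega>. v (i, s1 i \<beta>, \<omega>)" and b="\<lambda>\<beta> \<omega>. w (i, s2 i \<beta>, \<omega>)" and A="{0..<\<sigma>}" and C="{0..<d}"]
      unfolding G_def n1 n2 by simp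
    have h: "cmod (H i) \<le> (l * Nq \<sigma> d v i + Nq \<sigma> d w i / l) / 2"
      using cs_sum2[OF assms(4), where a="\<lambda>\<beta> \<omega>. v (i, \<beta>, \<omega>)" and b="\<lambda>\<beta> \<omega>. w (i, \<beta>, \<omega>)" and A="{0..<\<sigma>}" and C="{0..<d}"]
      unfolding H_def Nq_def by simp
    have "cmod (G i - H i) \<le> cmod (G i) + cmod (H i)" by (rule norm_triangle_ineq4)
    thus ?thesis using g h False by simp
  qed
  have "cmod ((\<Sum>i\<in>{0..<n}. G i) - (\<Sum>i\<in>{0..<n}. H i)) = cmod (\<Sum>i\<in>{0..<n}. G i - H i)"
    by (simp add: sum_subtractf)
  also have "\<dots> \<le> (\<Sum>i\<in>{0..<n}. cmod (G i - H i))" by (rule norm_sum)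
  also have "\<dots> \<le> (\<Sum>i\<in>{0..<n}. (if T1!i \<noteq> T2!i then l * Nq \<sigma> d v i + Nq \<sigma> d w i / l else 0))"
    by (intro sum_mono bnd)
  also have "\<dots> = (\<Sum>i\<in>{i\<in>{0..<n}. T1!i \<noteq> T2!i}. l * Nq \<sigma> d v i + Nq \<sigma> d w i / l)"
    by (subst sum.inter_filter) auto
  finally show ?thesis using e1 e2 by simp
qed

lemma nrm_unitary:
  assumes "finite B" "is_unitary B U"
  shows "nrm B (apply_op B U v) = nrm B v"
  using unitary_inner[OF assms, of v v] by (simp add: inB_self)

lemma nrm_query:
  assumes "length T = n" "0 < \<sigma>"
  shows "nrm (basis n \<sigma> d) (query_op \<sigma> T v) = nrm (basis n \<sigma> d) v"
proof -
  have "cmod (inB (basis n \<sigma> d) (query_op \<sigma> T v) (query_op \<sigma> T v) - inB (basis n \<sigma> d) v v) \<le> 0"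
    using query_diff[OF assms(1) assms(1) assms(2), of 1 d v v] by simp
  thus ?thesis by (simp add: inB_self)
qed

lemma finite_basis: "finite (basis n \<sigma> d)"
  unfolding basis_def by auto

lemma nrm_init:
  assumes "0 < n" "0 < \<sigma>" "0 < d"
  shows "nrm (basis n \<sigma> d) init_state = 1"
proof -
  have "nrm (basis n \<sigma> d) init_state = (\<Sum>x\<in>basis n \<sigma> d. if x = (0,0,0) then 1 else 0)"
    unfolding nrm_def init_state_def by (intro sum.cong refl) auto
  also have "\<dots> = 1" using assms finite_basis[of n \<sigma> d] by (simp add: sum.delta basis_def)
  finally show ?thesis .
qed

lemma nrm_run:
  assumes "valid_qalg n \<sigma> A" "length T = n" "0 < n" "0 < \<sigma>" "k \<le> nqueries A"
  shows "nrm (basis n \<sigma> (wdim A)) (run_state n \<sigma> A T k) = 1"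
  using assms(5)
proof (induction k)
  case 0
  thus ?case using assms nrm_unitary[OF finite_basis] nrm_init unfolding valid_qalg_def by auto
next
  case (Suc k)
  have u: "is_unitary (basis n \<sigma> (wdim A)) (unitaries A (Suc k))"
    using assms(1) Suc.prems unfolding valid_qalg_def by auto
  show ?case using Suc nrm_unitary[OF finite_basis u] nrm_query[OF assms(2) assms(4)] by simp
qed

lemma final_overlap:
  assumes "finite B" "nrm B p \<le> 1" "nrm B q \<le> 1"
    "2/3 \<le> (\<Sum>x\<in>B \<inter> Oa. (cmod (p x))^2)" "2/3 \<le> (\<Sum>x\<in>B \<inter> Ob. (cmod (q x))^2)" "Oa \<inter> Ob = {}"
  shows "cmod (inB B p q) \<le> 17/18"
proof -
  define a1 where "a1 = (\<Sum>x\<in>B \<inter> Oa. (cmod (p x))^2)"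
  define a2 where "a2 = (\<Sum>x\<in>B - Oa. (cmod (p x))^2)"
  define b1 where "b1 = (\<Sum>x\<in>B \<inter> Oa. (cmod (q x))^2)"
  define b2 where "b2 = (\<Sum>x\<in>B - Oa. (cmod (q x))^2)"
  have sa: "a1 + a2 \<le> 1" using assms(2) sum.Int_Diff[OF assms(1), of "\<lambda>x. (cmod (p x))^2" Oa]
    unfolding a1_def a2_def nrm_def by simp
  have sb: "b1 + b2 \<le> 1" using assms(3) sum.Int_Diff[OF assms(1), of "\<lambda>x. (cmod (q x))^2" Oa]
    unfolding b1_def b2_def nrm_def by simp
  have b2ge: "(\<Sum>x\<in>B \<inter> Ob. (cmod (q x))^2) \<le> b2" unfolding b2_def
    by (rule sum_mono2) (use assms(1,6) in auto)
  have "cmod (inB B p q) \<le> (\<Sum>x\<in>B. cmod (p x) * cmod (q x))"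
    unfolding inB_def by (rule order_trans[OF norm_sum]) (simp add: norm_mult)
  also have "\<dots> = (\<Sum>x\<in>B \<inter> Oa. cmod (p x) * cmod (q x)) + (\<Sum>x\<in>B - Oa. cmod (p x) * cmod (q x))"
    by (rule sum.Int_Diff[OF assms(1)])
  also have "(\<Sum>x\<in>B \<inter> Oa. cmod (p x) * cmod (q x)) \<le> (\<Sum>x\<in>B \<inter> Oa. ((3/4) * (cmod (p x))^2 + (cmod (q x))^2 / (3/4)) / 2)"
    by (intro sum_mono amgm) simp
  also have "\<dots> = (\<Sum>x\<in>B \<inter> Oa. (3/4) * (cmod (p x))^2 + (cmod (q x))^2 / (3/4)) / 2"
    by (simp add: sum_divide_distrib)
  also have "\<dots> = ((3/4) * a1 + (4/3) * b1) / 2"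
    unfolding a1_def b1_def by (simp add: sum.distrib sum_distrib_left sum_divide_distrib mult.commute)
  also have "(\<Sum>x\<in>B - Oa. cmod (p x) * cmod (q x)) \<le> (\<Sum>x\<in>B - Oa. ((4/3) * (cmod (p x))^2 + (cmod (q x))^2 / (4/3)) / 2)"
    by (intro sum_mono amgm) simp
  also have "\<dots> = (\<Sum>x\<in>B - Oa. (4/3) * (cmod (p x))^2 + (cmod (q x))^2 / (4/3)) / 2"
    by (simp add: sum_divide_distrib)
  also have "\<dots> = ((4/3) * a2 + (3/4) * b2) / 2"
    unfolding a2_def b2_def by (simp add: sum.distrib sum_distrib_left sum_divide_distrib mult.commute)
  finally have bnd0: "cmod (inB B p q) \<le> ((3/4) * a1 + (4/3) * b1) / 2 + ((4/3) * a2 + (3/4) * b2) / 2"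
    by simp
  moreover have "2/3 \<le> a1" using assms(4) a1_def by simp
  moreover have "2/3 \<le> b2" using assms(5) b2ge by simp
  ultimately have "((3/4) * a1 + (4/3) * b1) / 2 + ((4/3) * a2 + (3/4) * b2) / 2 \<le> 17/18"
    using sa sb by (simp add: field_simps)
  thus ?thesis using bnd0 by (rule order_trans[rotated])
qed

lemma adversary:
  assumes val: "valid_qalg n \<sigma> A" and pos: "0 < n" "0 < \<sigma>"
    and len: "length T1 = n" "length T2 = n"
    and p1: "2/3 \<le> prob_output n \<sigma> A T1 o1" and p2: "2/3 \<le> prob_output n \<sigma> A T2 o2"
    and ne: "o1 \<noteq> o2" and l: "0 < l"
  shows "1/18 \<le> (\<Sum>k<nqueries A. \<Sum>i\<in>{i\<in>{0..<n}. T1!i \<noteq> T2!i}.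
            l * Nq \<sigma> (wdim A) (run_state n \<sigma> A T1 k) i + Nq \<sigma> (wdim A) (run_state n \<sigma> A T2 k) i / l)"
proof -
  let ?B = "basis n \<sigma> (wdim A)"
  define s where "s k = cmod (inB ?B (run_state n \<sigma> A T1 k) (run_state n \<sigma> A T2 k))" for k
  define D where "D k = (\<Sum>i\<in>{i\<in>{0..<n}. T1!i \<noteq> T2!i}.
            l * Nq \<sigma> (wdim A) (run_state n \<sigma> A T1 k) i + Nq \<sigma> (wdim A) (run_state n \<sigma> A T2 k) i / l)" for k
  have step: "s k - D k \<le> s (Suc k)" if "Suc k \<le> nqueries A" for k
  proof -
    have u: "is_unitary ?B (unitaries A (Suc k))" using val that unfolding valid_qalg_def by auto
    have "s (Suc k) = cmod (inB ?B (query_op \<sigma> T1 (run_state n \<sigma> A T1 k)) (query_op \<sigma> T2 (run_state n \<sigma> A T2 k)))"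
      unfolding s_def by (simp add: unitary_inner[OF finite_basis u])
    moreover have "cmod (inB ?B (query_op \<sigma> T1 (run_state n \<sigma> A T1 k)) (query_op \<sigma> T2 (run_state n \<sigma> A T2 k))
        - inB ?B (run_state n \<sigma> A T1 k) (run_state n \<sigma> A T2 k)) \<le> D k"
      unfolding D_def by (rule query_diff[OF len pos(2) l])
    ultimately show ?thesis unfolding s_def
      by (smt (verit) norm_triangle_ineq2 norm_minus_commute)
  qed
  have acc: "m \<le> nqueries A \<Longrightarrow> s 0 - (\<Sum>k<m. D k) \<le> s m" for m
  proof (induction m)
    case 0 thus ?case by simp
  next
    case (Suc m)
    thus ?case using step[of m] by simp
  qed
  have s0: "s 0 = 1"
  proof -
    have "run_state n \<sigma> A T1 0 = run_state n \<sigma> A T2 0" by simp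
    hence "s 0 = cmod (inB ?B (run_state n \<sigma> A T1 0) (run_state n \<sigma> A T1 0))" unfolding s_def by simp
    also have "\<dots> = 1" using nrm_run[OF val len(1) pos, of 0] by (simp add: inB_self)
    finally show ?thesis .
  qed
  have st: "s (nqueries A) \<le> 17/18"
    unfolding s_def
  proof (rule final_overlap[OF finite_basis, where Oa = "{x. outp A x = o1}" and Ob = "{x. outp A x = o2}"])
    show "nrm ?B (run_state n \<sigma> A T1 (nqueries A)) \<le> 1" using nrm_run[OF val len(1) pos] by simp
    show "nrm ?B (run_state n \<sigma> A T2 (nqueries A)) \<le> 1" using nrm_run[OF val len(2) pos] by simp
    show "2/3 \<le> (\<Sum>x\<in>?B \<inter> {x. outp A x = o1}. (cmod (run_state n \<sigma> A T1 (nqueries A) x))^2)"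
      using p1 unfolding prob_output_def final_state_def by simp
    show "2/3 \<le> (\<Sum>x\<in>?B \<inter> {x. outp A x = o2}. (cmod (run_state n \<sigma> A T2 (nqueries A) x))^2)"
      using p2 unfolding prob_output_def final_state_def by simp
    show "{x. outp A x = o1} \<inter> {x. outp A x = o2} = {}" using ne by auto
  qed
  show ?thesis using acc[of "nqueries A"] s0 st unfolding D_def by simp
qed



definition J :: "nat list \<Rightarrow> nat \<Rightarrow> nat" where
  "J T i = i + max 1 (lz_len T i)"

lemma J_gt: "i < J T i" unfolding J_def by simp

lemma lz_aux_ge: "length T \<le> i \<Longrightarrow> lz_aux k T i = []"
  by (cases k) auto

lemma lz_aux_Suc_less: "i < length T \<Longrightarrow>
   lz_aux (Suc k) T i = take (max 1 (lz_len T i)) (drop i T) # lz_aux k T (J T i)"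
  by (simp add: J_def Let_def)

declare lz_aux.simps(2)[simp del]

lemma take1_drop: "k < length T \<Longrightarrow> take (Suc 0) (drop k T) = [T ! k]"
  by (simp add: Cons_nth_drop_Suc[symmetric])

lemma take_drop_nth: "m < l \<Longrightarrow> k + l \<le> length T \<Longrightarrow> take l (drop k T) ! m = T ! (k + m)"
  by simp

lemma lz_len_ge:
  assumes "i' < i" "1 \<le> l" "i + l \<le> length T" "take l (drop i' T) = take l (drop i T)"
  shows "l \<le> lz_len T i"
proof -
  have "take l (drop i' T) ! 0 = take l (drop i T) ! 0" using assms(4) by simp
  moreover have "take l (drop i' T) ! 0 = T ! i'" using assms by (subst take_drop_nth) auto
  moreover have "take l (drop i T) ! 0 = T ! i" using assms by (subst take_drop_nth) auto
  ultimately have eq: "T ! i' = T ! i" by simp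
  have "T ! i' \<in> set (take i T)" using assms by (auto simp: in_set_conv_nth intro!: exI[of _ i'])
  hence old: "T ! i \<in> set (take i T)" using eq by simp
  have "lz_len T i = (GREATEST l. 1 \<le> l \<and> i + l \<le> length T \<and>
             (\<exists>i' < i. i' + l \<le> length T \<and> take l (drop i' T) = take l (drop i T)))"
    using old unfolding lz_len_def by simp
  also have "l \<le> \<dots>"
    by (rule Greatest_le_nat[where b = "length T"]) (use assms in auto)
  finally show ?thesis .
qed

lemma lz_len_prop:
  assumes "i < length T" "T ! i \<in> set (take i T)"
  shows "\<exists>i'<i. 1 \<le> lz_len T i \<and> i + lz_len T i \<le> length T \<and>
     take (lz_len T i) (drop i' T) = take (lz_len T i) (drop i T)"
proof -
  define P where "P l = (1 \<le> l \<and> i + l \<le> length T \<and>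
             (\<exists>i' < i. i' + l \<le> length T \<and> take l (drop i' T) = take l (drop i T)))" for l
  obtain i' where i': "i' < i" "T ! i' = T ! i" using assms(2) by (auto simp: in_set_conv_nth)
  have "P 1" unfolding P_def using i' assms(1) by (auto simp: take1_drop intro!: exI[of _ i'])
  hence "P (Greatest P)" by (rule GreatestI_nat[where b = "length T"]) (auto simp: P_def)
  moreover have "lz_len T i = Greatest P" unfolding lz_len_def P_def using assms(2) by simp
  ultimately show ?thesis unfolding P_def by auto
qed

lemma J_step:
  assumes "Suc i < length T"
  shows "J T i \<le> J T (Suc i)"
proof (cases "T ! i \<in> set (take i T) \<and> 2 \<le> lz_len T i")
  case False
  hence "max 1 (lz_len T i) = 1" unfolding lz_len_def by auto
  thus ?thesis using J_gt[of "Suc i" T] unfolding J_def by simp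
next
  case True
  then obtain i' where i': "i' < i" "1 \<le> lz_len T i" "i + lz_len T i \<le> length T"
    "take (lz_len T i) (drop i' T) = take (lz_len T i) (drop i T)"
    using lz_len_prop[of i T] assms by auto
  define L where "L = lz_len T i"
  have "drop 1 (take L (drop i' T)) = drop 1 (take L (drop i T))" using i'(4) L_def by simp
  hence "take (L - 1) (drop (Suc i') T) = take (L - 1) (drop (Suc i) T)"
    by (simp add: drop_take)
  hence "L - 1 \<le> lz_len T (Suc i)"
    by (rule lz_len_ge[rotated 3]) (use True i' L_def in auto)
  thus ?thesis using True unfolding J_def L_def by auto
qed

lemma J_mono: "i \<le> i' \<Longrightarrow> i' < length T \<Longrightarrow> J T i \<le> J T i'"
proof (induction i' rule: dec_induct)
  case base thus ?case by simp
next
  case (step m)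
  thus ?case using J_step[of m T] by simp
qed

lemma lz_aux_mono: "i \<le> i' \<Longrightarrow> length (lz_aux k T i') \<le> length (lz_aux k T i)"
proof (induction k arbitrary: i i')
  case 0 thus ?case by simp
next
  case (Suc k)
  show ?case
  proof (cases "length T \<le> i'")
    case True thus ?thesis by (simp add: lz_aux_ge)
  next
    case False
    hence "i < length T" "i' < length T" using Suc.prems by auto
    moreover have "J T i \<le> J T i'" using J_mono Suc.prems False by simp
    ultimately show ?thesis using Suc.IH[of "J T i" "J T i'"] by (simp add: lz_aux_Suc_less)
  qed
qed

lemma lz_chain:
  assumes "q \<le> J T i \<or> length T \<le> i"
  shows "length (lz_aux k T i) \<le> Suc (length (lz_aux (k - 1) T q))"
proof (cases k)
  case 0 thus ?thesis by simp
next
  case (Suc k')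
  show ?thesis
  proof (cases "length T \<le> i")
    case True thus ?thesis by (simp add: lz_aux_ge)
  next
    case False
    hence "q \<le> J T i" using assms by simp
    thus ?thesis using False Suc lz_aux_mono[of q "J T i" k' T] by (simp add: lz_aux_Suc_less)
  qed
qed

lemma J_run:
  assumes "1 \<le> i" "i < e" "e \<le> length T" "\<forall>p. i - 1 \<le> p \<and> p < e \<longrightarrow> T ! p = a"
  shows "e \<le> J T i"
proof -
  have h: "T ! p = a" if "i - 1 \<le> p" "p < e" for p using assms(4) that by blast
  have "take (e - i) (drop (i - 1) T) = take (e - i) (drop i T)"
  proof (rule nth_equalityI)
    show "length (take (e - i) (drop (i - 1) T)) = length (take (e - i) (drop i T))" using assms by auto
    fix m assume "m < length (take (e - i) (drop (i - 1) T))"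
    hence m: "m < e - i" using assms by auto
    have "take (e - i) (drop (i - 1) T) ! m = T ! (i - 1 + m)" by (rule take_drop_nth) (use m assms in auto)
    also have "\<dots> = a" by (rule h) (use m assms in auto)
    also have "a = T ! (i + m)" by (rule h[symmetric]) (use m assms in auto)
    also have "\<dots> = take (e - i) (drop i T) ! m" by (rule take_drop_nth[symmetric]) (use m assms in auto)
    finally show "take (e - i) (drop (i - 1) T) ! m = take (e - i) (drop i T) ! m" .
  qed
  hence "e - i \<le> lz_len T i" by (rule lz_len_ge[rotated 3]) (use assms in auto)
  thus ?thesis unfolding J_def by simp
qed

lemma chain5:
  assumes "qb \<le> J T qa \<or> length T \<le> qa" "qc \<le> J T qb \<or> length T \<le> qb"
    "qd \<le> J T qc \<or> length T \<le> qc" "qe \<le> J T qd \<or> length T \<le> qd"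
    "qf \<le> J T qe \<or> length T \<le> qe" "length T \<le> qf"
  shows "length (lz_aux k T qa) \<le> 5"
proof -
  have "length (lz_aux k T qa) \<le> Suc (length (lz_aux (k-1) T qb))" by (rule lz_chain[OF assms(1)])
  also have "\<dots> \<le> Suc (Suc (length (lz_aux (k-1-1) T qc)))" using lz_chain[OF assms(2), of "k-1"] by linarith
  also have "\<dots> \<le> Suc (Suc (Suc (length (lz_aux (k-1-1-1) T qd))))" using lz_chain[OF assms(3), of "k-1-1"] by linarith
  also have "\<dots> \<le> Suc (Suc (Suc (Suc (length (lz_aux (k-1-1-1-1) T qe)))))" using lz_chain[OF assms(4), of "k-1-1-1"] by linarith
  also have "\<dots> \<le> Suc (Suc (Suc (Suc (Suc (length (lz_aux (k-1-1-1-1-1) T qf))))))" using lz_chain[OF assms(5), of "k-1-1-1-1"] by linarith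
  also have "\<dots> = 5" using assms(6) by (simp add: lz_aux_ge)
  finally show ?thesis .
qed

lemma concat_lz_aux: "length T \<le> i + k \<Longrightarrow> concat (lz_aux k T i) = drop i T"
proof (induction k arbitrary: i)
  case 0 thus ?case by simp
next
  case (Suc k)
  show ?case
  proof (cases "length T \<le> i")
    case True thus ?thesis by (simp add: lz_aux_ge)
  next
    case False
    define l where "l = max 1 (lz_len T i)"
    have "concat (lz_aux (Suc k) T i) = take l (drop i T) @ concat (lz_aux k T (i + l))"
      using False by (simp add: lz_aux_Suc_less J_def l_def)
    also have "concat (lz_aux k T (i + l)) = drop (i + l) T"
      by (rule Suc.IH) (use Suc.prems l_def in auto)
    also have "take l (drop i T) @ drop (i + l) T = drop i T"
      by (metis append_take_drop_id drop_drop add.commute)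
    finally show ?thesis .
  qed
qed

lemma concat_lz77: "concat (lz77 T) = T"
  unfolding lz77_def by (simp add: concat_lz_aux)

lemma factor_new:
  assumes "i < length T"
  shows "card (set (take (max 1 (lz_len T i)) (drop i T)) - set (take i T)) \<le> 1"
proof (cases "T ! i \<in> set (take i T)")
  case False
  hence "lz_len T i = 1" unfolding lz_len_def by simp
  thus ?thesis using assms by (simp add: take1_drop card_Diff_subset_Int)
next
  case True
  then obtain i' where i': "i' < i" "1 \<le> lz_len T i" "i + lz_len T i \<le> length T"
    "take (lz_len T i) (drop i' T) = take (lz_len T i) (drop i T)"
    using lz_len_prop[OF assms] by auto
  define L where "L = lz_len T i"
  have eqm: "T ! (i + m) = T ! (i' + m)" if "m < L" for m
  proof -
    have "take L (drop i' T) ! m = take L (drop i T) ! m" using i'(4) L_def by simp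
    moreover have "take L (drop i' T) ! m = T ! (i' + m)" by (rule take_drop_nth) (use that i' L_def in auto)
    moreover have "take L (drop i T) ! m = T ! (i + m)" by (rule take_drop_nth) (use that i' L_def in auto)
    ultimately show ?thesis by simp
  qed
  have all: "m < L \<longrightarrow> T ! (i + m) \<in> set (take i T)" for m
  proof (induction m rule: less_induct)
    case (less m)
    show ?case
    proof
      assume mL: "m < L"
      show "T ! (i + m) \<in> set (take i T)"
      proof (cases "i' + m < i")
        case True
        hence "T ! (i' + m) \<in> set (take i T)" using i' L_def mL
          by (auto simp: in_set_conv_nth intro!: exI[of _ "i' + m"])
        thus ?thesis using eqm[OF mL] by simp
      next
        case False
        define m' where "m' = i' + m - i"
        have "m' < m" using False i'(1) m'_def by simp
        hence "T ! (i + m') \<in> set (take i T)" using less mL by simp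
        moreover have "i + m' = i' + m" using False m'_def by simp
        ultimately show ?thesis using eqm[OF mL] by simp
      qed
    qed
  qed
  have "set (take L (drop i T)) \<subseteq> set (take i T)"
  proof
    fix x assume "x \<in> set (take L (drop i T))"
    then obtain m where "m < length (take L (drop i T))" "take L (drop i T) ! m = x"
      by (auto simp: in_set_conv_nth)
    thus "x \<in> set (take i T)" using all[of m] i' L_def by auto
  qed
  hence em: "set (take L (drop i T)) - set (take i T) = {}" by auto
  have mx: "max 1 (lz_len T i) = L" using i' L_def by simp
  show ?thesis unfolding mx em by simp
qed

lemma card_lz_aux: "length T \<le> i + k \<Longrightarrow> card (set (drop i T) - set (take i T)) \<le> length (lz_aux k T i)"
proof (induction k arbitrary: i)
  case 0 thus ?case by simp
next
  case (Suc k)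
  show ?case
  proof (cases "length T \<le> i")
    case True thus ?thesis by (simp add: lz_aux_ge)
  next
    case False
    define l where "l = max 1 (lz_len T i)"
    define f where "f = take l (drop i T)"
    have d: "drop i T = f @ drop (i + l) T" unfolding f_def
      by (metis append_take_drop_id drop_drop add.commute)
    have t: "take (i + l) T = take i T @ f" unfolding f_def by (simp add: take_add)
    have "set (drop i T) - set (take i T) \<subseteq>
        (set f - set (take i T)) \<union> (set (drop (i + l) T) - set (take (i + l) T))"
      using d t by auto
    hence "card (set (drop i T) - set (take i T)) \<le>
        card ((set f - set (take i T)) \<union> (set (drop (i + l) T) - set (take (i + l) T)))"
      by (intro card_mono) auto
    also have "\<dots> \<le> card (set f - set (take i T)) + card (set (drop (i + l) T) - set (take (i + l) T))"
      by (rule card_Un_le)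
    also have "\<dots> \<le> 1 + length (lz_aux k T (i + l))"
      using factor_new[of i T] False Suc.IH[of "i + l"] Suc.prems unfolding f_def l_def by fastforce
    also have "\<dots> = length (lz_aux (Suc k) T i)"
      using False by (simp add: lz_aux_Suc_less J_def l_def)
    finally show ?thesis .
  qed
qed

lemma lz_z_ge: "card (set T) \<le> lz_z T"
  using card_lz_aux[of T 0 "length T"] unfolding lz_z_def lz77_def by simp



fun decode :: "(nat \<times> nat) list \<Rightarrow> nat list" where
  "decode [] = []"
| "decode ((a, k) # rs) = replicate k a @ decode rs"

lemma decode_rle: "decode (rle xs) = xs"
proof (induction xs)
  case Nil thus ?case by simp
next
  case (Cons x xs)
  show ?case
  proof (cases "rle xs")
    case Nil
    hence "xs = []" using Cons.IH by simp
    thus ?thesis using Nil by simp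
  next
    case (Cons p rs)
    obtain y k where p: "p = (y, k)" by (cases p)
    show ?thesis using Cons.IH Cons p by auto
  qed
qed

lemma rle_inj: "rle xs = rle ys \<Longrightarrow> xs = ys"
  by (metis decode_rle)

lemma set_decode: "set (decode rs) \<subseteq> fst ` set rs"
  by (induction rs rule: decode.induct) auto

lemma rle_card: "card (set xs) \<le> length (rle xs)"
proof -
  have "card (set xs) \<le> card (fst ` set (rle xs))"
    using set_decode[of "rle xs"] unfolding decode_rle by (intro card_mono) auto
  also have "\<dots> \<le> card (set (rle xs))" by (rule card_image_le) simp
  also have "\<dots> \<le> length (rle xs)" by (rule card_length)
  finally show ?thesis .
qed

lemma rle_len_Cons: "length (rle (x # xs)) \<le> Suc (length (rle xs))"
  by (cases "rle xs") (auto split: prod.splits)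

lemma rle_hd: "\<exists>k rs. rle (x # xs) = (x, k) # rs"
  by (cases "rle xs") (auto split: prod.splits)

lemma rle_dup: "length (rle (x # x # xs)) = length (rle (x # xs))"
proof -
  obtain k rs where "rle (x # xs) = (x, k) # rs" using rle_hd by blast
  thus ?thesis by simp
qed

lemma rle_len_bound_aux:
  "length (rle xs) \<le> 2 * length (filter (\<lambda>x. x \<noteq> 0) xs) + (if xs \<noteq> [] \<and> hd xs = 0 then 1 else 0)"
proof (induction xs)
  case Nil thus ?case by simp
next
  case (Cons x xs)
  show ?case
  proof (cases "x = 0")
    case False
    thus ?thesis using Cons rle_len_Cons[of x xs] by (auto split: if_splits)
  next
    case True
    show ?thesis
    proof (cases xs)
      case Nil thus ?thesis using True by simp
    next
      case (Cons y ys)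
      show ?thesis
      proof (cases "y = 0")
        case True
        thus ?thesis using Cons.IH \<open>x = 0\<close> \<open>xs = y # ys\<close> rle_dup[of 0 ys] by simp
      next
        case False
        thus ?thesis using Cons.IH \<open>x = 0\<close> \<open>xs = y # ys\<close> rle_len_Cons[of x xs] by simp
      qed
    qed
  qed
qed

lemma rle_len_bound: "length (rle xs) \<le> 2 * length (filter (\<lambda>x. x \<noteq> 0) xs) + 1"
  using rle_len_bound_aux[of xs] by (auto split: if_splits)

lemma take_map_nth: "m \<le> length T \<Longrightarrow> map (\<lambda>i. T ! i) [0..<m] = take m T"
  by (rule nth_equalityI) auto

lemma mset_bwt: "mset (bwt T) = mset T"
proof (cases "length T")
  case 0 thus ?thesis by (simp add: bwt_def)
next
  case (Suc m)
  define g :: "nat list \<Rightarrow> nat" where "g s = (let p = length T - length s in if p = 0 then T ! (length T - 1) else T ! (p - 1))" for s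
  have "mset (bwt T) = mset (map g (sort (map (\<lambda>i. drop i T) [0..<length T])))"
    unfolding bwt_def g_def by (simp add: Let_def)
  also have "\<dots> = image_mset g (mset (map (\<lambda>i. drop i T) [0..<length T]))"
    by (simp add: mset_map)
  also have "\<dots> = mset (map g (map (\<lambda>i. drop i T) [0..<length T]))"
    by (simp only: mset_map)
  also have "map g (map (\<lambda>i. drop i T) [0..<length T]) = map (\<lambda>i. g (drop i T)) [0..<length T]"
    by simp
  also have "map (\<lambda>i. g (drop i T)) [0..<length T] = T ! m # map (\<lambda>i. T ! i) [0..<m]"
  proof -
    have "[0..<length T] = 0 # map Suc [0..<m]" using Suc by (simp only: upt_conv_Cons map_Suc_upt)
    hence e: "[0..<length T] = 0 # map Suc [0..<m]" .
    show ?thesis unfolding e g_def using Suc by (auto simp: Let_def)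
  qed
  also have "\<dots> = T ! m # take m T" using Suc by (simp add: take_map_nth)
  also have "mset (T ! m # take m T) = mset T"
  proof -
    have "T = take m T @ [T ! m]" using Suc
      by (metis append_Nil2 append_eq_conv_conj drop_eq_Nil id_take_nth_drop le_refl lessI)
    hence "mset T = mset (take m T) + {#T ! m#}" by (metis mset_append mset.simps)
    thus ?thesis by simp
  qed
  finally show ?thesis .
qed

lemma sum_list_bwt: "sum_list (bwt T) = sum_list T"
  by (metis mset_bwt sum_mset_sum_list)

lemma set_bwt: "set (bwt T) = set T"
  by (metis mset_bwt set_mset_mset)

lemma filter_bwt: "length (filter P (bwt T)) = length (filter P T)"
  by (metis mset_bwt mset_filter size_mset)

lemma bwt_r_ge: "card (set T) \<le> bwt_r T"
  unfolding bwt_r_def rlbwt_def using rle_card[of "bwt T"] set_bwt[of T] by simp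

lemma bwt_r_le: "bwt_r T \<le> 2 * length (filter (\<lambda>x. x \<noteq> 0) T) + 1"
  unfolding bwt_r_def rlbwt_def using rle_len_bound[of "bwt T"] filter_bwt[of _ T] by simp

lemma rlbwt_ne: "sum_list T \<noteq> sum_list T' \<Longrightarrow> rlbwt T \<noteq> rlbwt T'"
  unfolding rlbwt_def using rle_inj sum_list_bwt by metis



definition E :: "nat \<Rightarrow> nat \<Rightarrow> nat list" where
  "E j n = map (\<lambda>p. if p = j then 1 else 0) [0..<n]"

lemma E_len[simp]: "length (E j n) = n" unfolding E_def by simp

lemma E_nth: "p < n \<Longrightarrow> E j n ! p = (if p = j then 1 else 0)" unfolding E_def by simp

lemma E_texts: "1 < \<sigma> \<Longrightarrow> E j n \<in> texts \<sigma> n"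
  unfolding texts_def E_def by auto

lemma E_diff: "j < n \<Longrightarrow> {i \<in> {0..<n}. E n n ! i \<noteq> E j n ! i} = {j}"
  by (auto simp: E_nth split: if_splits)

lemma E_ne: "j < n \<Longrightarrow> E j n \<noteq> E n n"
  by (metis E_nth less_irrefl zero_neq_one)

lemma E_sum: "j < n \<Longrightarrow> sum_list (E j n) \<noteq> sum_list (E n n)"
proof -
  assume j: "j < n"
  have "E n n = replicate n 0" by (rule nth_equalityI) (auto simp: E_nth)
  hence "sum_list (E n n) = 0" by simp
  moreover have "E j n ! j \<le> sum_list (E j n)" by (rule elem_le_sum_list) (use j in simp)
  moreover have "E j n ! j = 1" using j by (simp add: E_nth)
  ultimately show ?thesis by linarith
qed

lemma E_filter: "length (filter (\<lambda>x. x \<noteq> 0) (E j n)) \<le> 1"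
proof -
  have "length (filter (\<lambda>x. x \<noteq> 0) (E j n)) = card {i. i < n \<and> E j n ! i \<noteq> 0}"
    by (simp add: length_filter_conv_card)
  also have "\<dots> \<le> card {j}" by (rule card_mono) (auto simp: E_nth split: if_splits)
  finally show ?thesis by simp
qed

lemma E_bwt_r: "bwt_r (E j n) \<le> 3"
  using bwt_r_le[of "E j n"] E_filter[of j n] by simp

lemma Jq: "q \<le> Suc i \<Longrightarrow> q \<le> J T i \<or> length T \<le> i"
  using J_gt[of i T] by simp

lemma J_ge: "q \<le> Suc i \<Longrightarrow> q \<le> J T i"
  using J_gt[of i T] by simp

lemma E_lz:
  assumes "j \<le> n" "2 \<le> n"
  shows "lz_z (E j n) \<le> 5"
proof -
  let ?T = "E j n"
  have z: "lz_z ?T = length (lz_aux n ?T 0)" unfolding lz_z_def lz77_def by simp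
  show ?thesis
  proof (cases "j = n")
    case True
    have "n \<le> J ?T 1" by (rule J_run[where a = 0]) (use assms True in \<open>auto simp: E_nth\<close>)
    hence "length (lz_aux n ?T 0) \<le> 5"
      by (intro chain5[where qb = 1 and qc = n and qd = n and qe = n and qf = n]) (auto intro: Jq J_ge)
    thus ?thesis using z by simp
  next
    case False
    hence jn: "j < n" using assms by simp
    show ?thesis
    proof (cases "j = 0")
      case True
      have s3: "n \<le> J ?T 2 \<or> length ?T \<le> 2"
      proof (cases "2 < n")
        case True
        have "n \<le> J ?T 2" by (rule J_run[where a = 0]) (use True \<open>j = 0\<close> in \<open>auto simp: E_nth\<close>)
        thus ?thesis by simp
      qed simp
      have "length (lz_aux n ?T 0) \<le> 5"
        by (intro chain5[where qb = 1 and qc = 2 and qd = n and qe = n and qf = n]) (use s3 in \<open>auto intro: Jq J_ge\<close>)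
      thus ?thesis using z by simp
    next
      case False
      have s2: "j \<le> J ?T 1 \<or> length ?T \<le> 1"
      proof (cases "j = 1")
        case True thus ?thesis by (intro Jq) simp
      next
        case False
        hence "2 \<le> j" using \<open>j \<noteq> 0\<close> by simp
        have "j \<le> J ?T 1" by (rule J_run[where a = 0]) (use \<open>2 \<le> j\<close> jn in \<open>auto simp: E_nth\<close>)
        thus ?thesis by simp
      qed
      have s5: "n \<le> J ?T (j + 2) \<or> length ?T \<le> j + 2"
      proof (cases "j + 2 < n")
        case True
        have "n \<le> J ?T (j + 2)" by (rule J_run[where a = 0]) (use True in \<open>auto simp: E_nth\<close>)
        thus ?thesis by simp
      qed simp
      have "length (lz_aux n ?T 0) \<le> 5"
        by (intro chain5[where qb = 1 and qc = j and qd = "j + 1" and qe = "j + 2" and qf = n])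
           (use s2 s5 in \<open>auto intro: Jq J_ge\<close>)
      thus ?thesis using z by simp
    qed
  qed
qed

definition Fc :: "nat \<Rightarrow> nat list set" where
  "Fc n = {T. length T = n \<and> (\<forall>p<n. (even p \<longrightarrow> T ! p = 2 + p div 2) \<and> (odd p \<longrightarrow> T ! p \<le> 1))}"

lemma ne1: "(x::nat) \<le> 1 \<Longrightarrow> x \<noteq> 1 - x" by (cases x) auto

definition flip :: "nat \<Rightarrow> nat list \<Rightarrow> nat list" where
  "flip j T = T[j := 1 - T ! j]"

lemma Fc_texts:
  assumes "4 \<le> n" "n \<le> \<sigma>"
  shows "Fc n \<subseteq> texts \<sigma> n"
proof
  fix T assume T: "T \<in> Fc n"
  have "x < \<sigma>" if xs: "x \<in> set T" for x
  proof -
    obtain p where p0: "p < length T" "T ! p = x" using xs by (auto simp: in_set_conv_nth)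
    have p: "p < n" "T ! p = x" using p0 T by (auto simp: Fc_def)
    show ?thesis
    proof (cases "even p")
      case True
      have "2 + p div 2 < n" using p(1) assms(1) by presburger
      thus ?thesis using True p T assms(2) by (auto simp: Fc_def)
    next
      case False
      thus ?thesis using p T assms by (fastforce simp: Fc_def)
    qed
  qed
  thus "T \<in> texts \<sigma> n" using T by (auto simp: texts_def Fc_def)
qed

lemma Fc_finite: "finite (Fc n)"
proof (rule finite_subset)
  show "Fc n \<subseteq> {xs. set xs \<subseteq> {0..<n+2} \<and> length xs = n}"
  proof
    fix T assume T: "T \<in> Fc n"
    have "x < n + 2" if xs: "x \<in> set T" for x
    proof -
      obtain p where p0: "p < length T" "T ! p = x" using xs by (auto simp: in_set_conv_nth)
    have p: "p < n" "T ! p = x" using p0 T by (auto simp: Fc_def)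
      have "2 + p div 2 < n + 2" using p(1) by simp
      thus ?thesis using p T by (cases "even p") (auto simp: Fc_def)
    qed
    thus "T \<in> {xs. set xs \<subseteq> {0..<n+2} \<and> length xs = n}" using T by (auto simp: Fc_def)
  qed
qed (rule finite_lists_length_eq, simp)

lemma Fc_ne: "Fc n \<noteq> {}"
proof -
  have "map (\<lambda>p. if even p then 2 + p div 2 else 0) [0..<n] \<in> Fc n" unfolding Fc_def by auto
  thus ?thesis by blast
qed

lemma flip_in: "T \<in> Fc n \<Longrightarrow> j < n \<Longrightarrow> odd j \<Longrightarrow> flip j T \<in> Fc n"
  unfolding Fc_def flip_def by (auto simp: nth_list_update)

lemma flip_flip: "T \<in> Fc n \<Longrightarrow> j < n \<Longrightarrow> odd j \<Longrightarrow> flip j (flip j T) = T"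
proof -
  assume a: "T \<in> Fc n" "j < n" "odd j"
  hence "T ! j \<le> 1" "length T = n" unfolding Fc_def by auto
  thus ?thesis unfolding flip_def using a(2) by auto
qed

lemma flip_diff: "T \<in> Fc n \<Longrightarrow> j < n \<Longrightarrow> odd j \<Longrightarrow> {i \<in> {0..<n}. T ! i \<noteq> flip j T ! i} = {j}"
proof -
  assume a: "T \<in> Fc n" "j < n" "odd j"
  hence "T ! j \<le> 1" "length T = n" unfolding Fc_def by auto
  thus ?thesis unfolding flip_def using a(2) ne1[of "T ! j"] by (auto simp: nth_list_update)
qed

lemma flip_sum: "T \<in> Fc n \<Longrightarrow> j < n \<Longrightarrow> odd j \<Longrightarrow> sum_list T \<noteq> sum_list (flip j T)"
proof -
  assume a: "T \<in> Fc n" "j < n" "odd j"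
  hence b: "T ! j \<le> 1" "length T = n" unfolding Fc_def by auto
  have "sum_list T = sum_list (take j T) + T ! j + sum_list (drop (Suc j) T)"
    using id_take_nth_drop[of j T] a(2) b(2) by (metis add.assoc sum_list.Cons sum_list_append)
  moreover have "sum_list (flip j T) = sum_list (take j T) + (1 - T ! j) + sum_list (drop (Suc j) T)"
    unfolding flip_def using upd_conv_take_nth_drop[of j T] a(2) b(2)
    by (metis add.assoc sum_list.Cons sum_list_append)
  ultimately show ?thesis using b(1) by (cases "T ! j") auto
qed

lemma flip_ne: "T \<in> Fc n \<Longrightarrow> j < n \<Longrightarrow> odd j \<Longrightarrow> T \<noteq> flip j T"
  using flip_sum by metis

lemma Fc_card_set: "T \<in> Fc n \<Longrightarrow> (n + 1) div 2 \<le> card (set T)"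
proof -
  assume T: "T \<in> Fc n"
  have "(\<lambda>q. 2 + q) ` {..<(n + 1) div 2} \<subseteq> set T"
  proof
    fix x assume "x \<in> (\<lambda>q. 2 + q) ` {..<(n + 1) div 2}"
    then obtain q where q: "q < (n + 1) div 2" "x = 2 + q" by auto
    have "2 * q < n" using q(1) by presburger
    moreover have "T ! (2 * q) = x" using T q \<open>2 * q < n\<close> unfolding Fc_def by auto
    ultimately show "x \<in> set T" using T unfolding Fc_def by (auto simp: in_set_conv_nth)
  qed
  hence "card ((\<lambda>q. 2 + q) ` {..<(n + 1) div 2}) \<le> card (set T)" by (intro card_mono) auto
  moreover have "card ((\<lambda>q. 2 + q) ` {..<(n + 1) div 2}) = (n + 1) div 2"
    by (subst card_image) (auto simp: inj_on_def)
  ultimately show ?thesis by simp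
qed



lemma Nq_le_one:
  assumes "valid_qalg n \<sigma> A" "length T = n" "0 < n" "0 < \<sigma>" "k \<le> nqueries A" "j < n"
  shows "Nq \<sigma> (wdim A) (run_state n \<sigma> A T k) j \<le> 1"
proof -
  have "Nq \<sigma> (wdim A) (run_state n \<sigma> A T k) j \<le> (\<Sum>i\<in>{0..<n}. Nq \<sigma> (wdim A) (run_state n \<sigma> A T k) i)"
    by (rule member_le_sum) (use assms(6) Nq_nonneg in auto)
  also have "\<dots> = 1" using nrm_run[OF assms(1-5)] by (simp add: nrm_basis)
  finally show ?thesis .
qed

lemma Nq_sum_one:
  assumes "valid_qalg n \<sigma> A" "length T = n" "0 < n" "0 < \<sigma>" "k \<le> nqueries A"
  shows "(\<Sum>i\<in>{0..<n}. Nq \<sigma> (wdim A) (run_state n \<sigma> A T k) i) = 1"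
  using nrm_run[OF assms(1-5)] by (simp add: nrm_basis)

lemma grover_lb:
  fixes f :: "nat list \<Rightarrow> 'o"
  assumes comp: "computes n \<sigma> A f S" and n2: "2 \<le> n" and s2: "2 \<le> \<sigma>"
    and inS: "\<And>j. j \<le> n \<Longrightarrow> E j n \<in> S" and ne: "\<And>j. j < n \<Longrightarrow> f (E j n) \<noteq> f (E n n)"
  shows "sqrt (real n) / 36 \<le> real (nqueries A)"
proof -
  have val: "valid_qalg n \<sigma> A" and pr: "\<And>T. T \<in> S \<Longrightarrow> 2/3 \<le> prob_output n \<sigma> A T (f T)"
    using comp unfolding computes_def by auto
  define t where "t = nqueries A"
  define l where "l = sqrt (real n)"
  define N where "N k T j = Nq \<sigma> (wdim A) (run_state n \<sigma> A T k) j" for k T j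
  have pos: "0 < n" "0 < \<sigma>" using n2 s2 by auto
  have lpos: "0 < l" unfolding l_def using pos by simp
  have each: "1/18 \<le> (\<Sum>k<t. l * N k (E n n) j + N k (E j n) j / l)" if j: "j < n" for j
  proof -
    have "1/18 \<le> (\<Sum>k<nqueries A. \<Sum>i\<in>{i\<in>{0..<n}. E n n ! i \<noteq> E j n ! i}.
            l * Nq \<sigma> (wdim A) (run_state n \<sigma> A (E n n) k) i + Nq \<sigma> (wdim A) (run_state n \<sigma> A (E j n) k) i / l)"
      by (rule adversary[OF val pos E_len E_len pr[OF inS] pr[OF inS] ne[OF j, symmetric] lpos]) (use j in auto)
    thus ?thesis unfolding E_diff[OF j] t_def N_def by simp
  qed
  have inner: "(\<Sum>j\<in>{0..<n}. l * N k (E n n) j + N k (E j n) j / l) \<le> l + real n / l" if k: "k < t" for k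
  proof -
    have A: "(\<Sum>j\<in>{0..<n}. N k (E n n) j) = 1"
      unfolding N_def by (rule Nq_sum_one[OF val E_len pos]) (use k t_def in simp)
    have "(\<Sum>j\<in>{0..<n}. N k (E j n) j) \<le> (\<Sum>j\<in>{0..<n}. (1::real))"
      by (rule sum_mono) (unfold N_def, rule Nq_le_one[OF val E_len pos], use k t_def in auto)
    hence B: "(\<Sum>j\<in>{0..<n}. N k (E j n) j) \<le> real n" by simp
    have "(\<Sum>j\<in>{0..<n}. l * N k (E n n) j + N k (E j n) j / l)
        = l * (\<Sum>j\<in>{0..<n}. N k (E n n) j) + (\<Sum>j\<in>{0..<n}. N k (E j n) j) / l"
      by (simp add: sum.distrib sum_distrib_left sum_divide_distrib)
    also have "\<dots> \<le> l + real n / l" using A B lpos by (simp add: divide_right_mono)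
    finally show ?thesis .
  qed
  have "real n / 18 = (\<Sum>j\<in>{0..<n}. (1/18::real))" by simp
  also have "\<dots> \<le> (\<Sum>j\<in>{0..<n}. \<Sum>k<t. l * N k (E n n) j + N k (E j n) j / l)"
    by (rule sum_mono) (use each in auto)
  also have "\<dots> = (\<Sum>k<t. \<Sum>j\<in>{0..<n}. l * N k (E n n) j + N k (E j n) j / l)"
    by (rule sum.swap)
  also have "\<dots> \<le> (\<Sum>k<t. l + real n / l)"
    by (rule sum_mono) (use inner in auto)
  also have "\<dots> = real t * (l + real n / l)" by simp
  also have "l + real n / l = 2 * l" unfolding l_def using pos
    by (simp add: real_div_sqrt)
  finally have "l * l / 18 \<le> l * (2 * real t)" unfolding l_def using pos by (simp add: ac_simps)
  hence "l * (l / 18) \<le> l * (2 * real t)" by simp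
  hence "l / 18 \<le> 2 * real t" using lpos by (simp only: mult_le_cancel_left_pos)
  thus ?thesis unfolding l_def t_def by simp
qed

lemma cube_lb:
  fixes f :: "nat list \<Rightarrow> 'o"
  assumes comp: "computes n \<sigma> A f S" and n4: "4 \<le> n" and ns: "n \<le> \<sigma>"
    and inS: "Fc n \<subseteq> S" and ne: "\<And>T j. T \<in> Fc n \<Longrightarrow> j < n \<Longrightarrow> odd j \<Longrightarrow> f T \<noteq> f (flip j T)"
  shows "real (n div 2) / 36 \<le> real (nqueries A)"
proof -
  have val: "valid_qalg n \<sigma> A" and pr: "\<And>T. T \<in> S \<Longrightarrow> 2/3 \<le> prob_output n \<sigma> A T (f T)"
    using comp unfolding computes_def by auto
  define t where "t = nqueries A"
  define N where "N k T j = Nq \<sigma> (wdim A) (run_state n \<sigma> A T k) j" for k T j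
  define Jo where "Jo = (\<lambda>q. 2 * q + 1) ` {..<n div 2}"
  have pos: "0 < n" "0 < \<sigma>" using n4 ns by auto
  have Jo: "j < n" "odd j" if "j \<in> Jo" for j using that unfolding Jo_def by auto
  have cJo: "card Jo = n div 2" unfolding Jo_def by (subst card_image) (auto simp: inj_on_def)
  have fJo: "finite Jo" unfolding Jo_def by simp
  have lenF: "length T = n" if "T \<in> Fc n" for T using that unfolding Fc_def by auto
  have each: "1/18 \<le> (\<Sum>k<t. N k T j + N k (flip j T) j)" if T: "T \<in> Fc n" and j: "j \<in> Jo" for T j
  proof -
    have fl: "flip j T \<in> Fc n" by (rule flip_in[OF T Jo[OF j]])
    have "1/18 \<le> (\<Sum>k<nqueries A. \<Sum>i\<in>{i\<in>{0..<n}. T ! i \<noteq> flip j T ! i}.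
            1 * Nq \<sigma> (wdim A) (run_state n \<sigma> A T k) i + Nq \<sigma> (wdim A) (run_state n \<sigma> A (flip j T) k) i / 1)"
      by (rule adversary[OF val pos lenF[OF T] lenF[OF fl] pr pr ne[OF T Jo[OF j]]]) (use T fl inS in auto)
    thus ?thesis unfolding flip_diff[OF T Jo[OF j]] t_def N_def by simp
  qed
  have le1: "(\<Sum>j\<in>Jo. N k T j) \<le> 1" if "T \<in> Fc n" "k < t" for k T
  proof -
    have "(\<Sum>j\<in>Jo. N k T j) \<le> (\<Sum>j\<in>{0..<n}. N k T j)"
      by (rule sum_mono2) (use Jo N_def Nq_nonneg in auto)
    also have "\<dots> = 1" unfolding N_def by (rule Nq_sum_one[OF val lenF[OF that(1)] pos]) (use that t_def in simp)
    finally show ?thesis .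
  qed
  have swapF: "(\<Sum>T\<in>Fc n. N k (flip j T) j) = (\<Sum>T\<in>Fc n. N k T j)" if "j \<in> Jo" for k j
    by (rule sum.reindex_bij_witness[where i = "flip j" and j = "flip j"])
       (use that Jo flip_in flip_flip in auto)
  have "real (card (Fc n) * card Jo) / 18 = (\<Sum>T\<in>Fc n. \<Sum>j\<in>Jo. (1/18::real))" by simp
  also have "\<dots> \<le> (\<Sum>T\<in>Fc n. \<Sum>j\<in>Jo. \<Sum>k<t. N k T j + N k (flip j T) j)"
    by (intro sum_mono) (use each in auto)
  also have "\<dots> = (\<Sum>T\<in>Fc n. \<Sum>k<t. \<Sum>j\<in>Jo. N k T j + N k (flip j T) j)"
    by (rule sum.cong[OF refl]) (rule sum.swap)
  also have "\<dots> = (\<Sum>k<t. \<Sum>T\<in>Fc n. \<Sum>j\<in>Jo. N k T j + N k (flip j T) j)"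
    by (rule sum.swap)
  also have "\<dots> = (\<Sum>k<t. (\<Sum>T\<in>Fc n. \<Sum>j\<in>Jo. N k T j) + (\<Sum>T\<in>Fc n. \<Sum>j\<in>Jo. N k (flip j T) j))"
    by (simp add: sum.distrib)
  also have "\<dots> = (\<Sum>k<t. 2 * (\<Sum>T\<in>Fc n. \<Sum>j\<in>Jo. N k T j))"
  proof (rule sum.cong[OF refl])
    fix k
    have "(\<Sum>T\<in>Fc n. \<Sum>j\<in>Jo. N k (flip j T) j) = (\<Sum>j\<in>Jo. \<Sum>T\<in>Fc n. N k (flip j T) j)"
      by (rule sum.swap)
    also have "\<dots> = (\<Sum>j\<in>Jo. \<Sum>T\<in>Fc n. N k T j)" by (rule sum.cong[OF refl]) (rule swapF)
    also have "\<dots> = (\<Sum>T\<in>Fc n. \<Sum>j\<in>Jo. N k T j)" by (rule sum.swap)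
    finally show "(\<Sum>T\<in>Fc n. \<Sum>j\<in>Jo. N k T j) + (\<Sum>T\<in>Fc n. \<Sum>j\<in>Jo. N k (flip j T) j)
        = 2 * (\<Sum>T\<in>Fc n. \<Sum>j\<in>Jo. N k T j)" by simp
  qed
  also have "\<dots> \<le> (\<Sum>k<t. 2 * (\<Sum>T\<in>Fc n. (1::real)))"
    by (intro sum_mono mult_left_mono) (use le1 in auto)
  also have "\<dots> = real t * (2 * real (card (Fc n)))" by simp
  finally have "real (card (Fc n)) * (real (card Jo) / 18) \<le> real (card (Fc n)) * (2 * real t)"
    by (simp add: algebra_simps)
  moreover have "0 < real (card (Fc n))" using Fc_finite Fc_ne by (simp add: card_gt_0_iff)
  ultimately have "real (card Jo) / 18 \<le> 2 * real t" by (simp only: mult_le_cancel_left_pos)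
  thus ?thesis using cJo unfolding t_def by simp
qed



lemma half_le: "(1/2) * real n \<le> real ((n + 1) div 2)"
proof -
  have "n \<le> 2 * ((n + 1) div 2)" by presburger
  hence "real n \<le> 2 * real ((n + 1) div 2)" by linarith
  thus ?thesis by simp
qed

lemma third_le: "4 \<le> n \<Longrightarrow> real n / 108 \<le> real (n div 2) / 36"
proof -
  assume "4 \<le> n"
  hence "n \<le> 3 * (n div 2)" by presburger
  hence "real n \<le> 3 * real (n div 2)" by linarith
  thus ?thesis by simp
qed

theorem theorem4:
  shows
  "(\<exists>C c N. 0 < c \<and> (\<forall>n \<ge> N. \<forall>\<sigma> \<ge> n. \<forall>A :: nat list list qalg.
       computes n \<sigma> A lz77 {T \<in> texts \<sigma> n. lz_z T \<le> C}
       \<longrightarrow> c * sqrt (real n) \<le> real (nqueries A)))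
 \<and> (\<exists>\<delta> c N. 0 < \<delta> \<and> 0 < c \<and> (\<forall>n \<ge> N. \<forall>\<sigma> \<ge> n. \<forall>A :: nat list list qalg.
       computes n \<sigma> A lz77 {T \<in> texts \<sigma> n. \<delta> * real n \<le> real (lz_z T)}
       \<longrightarrow> c * real n \<le> real (nqueries A)))
 \<and> (\<exists>C c N. 0 < c \<and> (\<forall>n \<ge> N. \<forall>\<sigma> \<ge> n. \<forall>A :: (nat \<times> nat) list qalg.
       computes n \<sigma> A rlbwt {T \<in> texts \<sigma> n. bwt_r T \<le> C}
       \<longrightarrow> c * sqrt (real n) \<le> real (nqueries A)))
 \<and> (\<exists>\<delta> c N. 0 < \<delta> \<and> 0 < c \<and> (\<forall>n \<ge> N. \<forall>\<sigma> \<ge> n. \<forall>A :: (nat \<times> nat) list qalg.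
       computes n \<sigma> A rlbwt {T \<in> texts \<sigma> n. \<delta> * real n \<le> real (bwt_r T)}
       \<longrightarrow> c * real n \<le> real (nqueries A)))"
proof (intro conjI)
  show "\<exists>C c N. 0 < c \<and> (\<forall>n \<ge> N. \<forall>\<sigma> \<ge> n. \<forall>A :: nat list list qalg.
       computes n \<sigma> A lz77 {T \<in> texts \<sigma> n. lz_z T \<le> C}
       \<longrightarrow> c * sqrt (real n) \<le> real (nqueries A))"
  proof (rule exI[of _ "5::nat"], rule exI[of _ "1/36::real"], rule exI[of _ "2::nat"], intro conjI allI impI)
    fix n \<sigma> :: nat and A :: "nat list list qalg"
    assume n: "2 \<le> n" and s: "n \<le> \<sigma>" and comp: "computes n \<sigma> A lz77 {T \<in> texts \<sigma> n. lz_z T \<le> 5}"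
    have "sqrt (real n) / 36 \<le> real (nqueries A)"
    proof (rule grover_lb[OF comp n])
      show "2 \<le> \<sigma>" using n s by simp
      fix j
      show "j \<le> n \<Longrightarrow> E j n \<in> {T \<in> texts \<sigma> n. lz_z T \<le> 5}"
        using E_texts[of \<sigma> j n] E_lz[of j n] n s by simp
      show "j < n \<Longrightarrow> lz77 (E j n) \<noteq> lz77 (E n n)"
        using E_ne concat_lz77 by metis
    qed
    thus "1/36 * sqrt (real n) \<le> real (nqueries A)" by simp
  qed simp
next
  show "\<exists>\<delta> c N. 0 < \<delta> \<and> 0 < c \<and> (\<forall>n \<ge> N. \<forall>\<sigma> \<ge> n. \<forall>A :: nat list list qalg.
       computes n \<sigma> A lz77 {T \<in> texts \<sigma> n. \<delta> * real n \<le> real (lz_z T)}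
       \<longrightarrow> c * real n \<le> real (nqueries A))"
  proof (rule exI[of _ "1/2::real"], rule exI[of _ "1/108::real"], rule exI[of _ "4::nat"], intro conjI allI impI)
    fix n \<sigma> :: nat and A :: "nat list list qalg"
    assume n: "4 \<le> n" and s: "n \<le> \<sigma>"
      and comp: "computes n \<sigma> A lz77 {T \<in> texts \<sigma> n. 1/2 * real n \<le> real (lz_z T)}"
    have "real (n div 2) / 36 \<le> real (nqueries A)"
    proof (rule cube_lb[OF comp n s])
      show "Fc n \<subseteq> {T \<in> texts \<sigma> n. 1/2 * real n \<le> real (lz_z T)}"
      proof
        fix T assume T: "T \<in> Fc n"
        have "(n + 1) div 2 \<le> lz_z T" using Fc_card_set[OF T] lz_z_ge[of T] by simp
        hence "1/2 * real n \<le> real (lz_z T)" using half_le[of n] by linarith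
        thus "T \<in> {T \<in> texts \<sigma> n. 1/2 * real n \<le> real (lz_z T)}" using Fc_texts[OF n s] T by auto
      qed
      fix T j
      show "T \<in> Fc n \<Longrightarrow> j < n \<Longrightarrow> odd j \<Longrightarrow> lz77 T \<noteq> lz77 (flip j T)"
        using flip_ne concat_lz77 by metis
    qed
    thus "1/108 * real n \<le> real (nqueries A)" using third_le[OF n] by simp
  qed simp_all
next
  show "\<exists>C c N. 0 < c \<and> (\<forall>n \<ge> N. \<forall>\<sigma> \<ge> n. \<forall>A :: (nat \<times> nat) list qalg.
       computes n \<sigma> A rlbwt {T \<in> texts \<sigma> n. bwt_r T \<le> C}
       \<longrightarrow> c * sqrt (real n) \<le> real (nqueries A))"
  proof (rule exI[of _ "3::nat"], rule exI[of _ "1/36::real"], rule exI[of _ "2::nat"], intro conjI allI impI)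
    fix n \<sigma> :: nat and A :: "(nat \<times> nat) list qalg"
    assume n: "2 \<le> n" and s: "n \<le> \<sigma>" and comp: "computes n \<sigma> A rlbwt {T \<in> texts \<sigma> n. bwt_r T \<le> 3}"
    have "sqrt (real n) / 36 \<le> real (nqueries A)"
    proof (rule grover_lb[OF comp n])
      show "2 \<le> \<sigma>" using n s by simp
      fix j
      show "j \<le> n \<Longrightarrow> E j n \<in> {T \<in> texts \<sigma> n. bwt_r T \<le> 3}"
        using E_texts[of \<sigma> j n] E_bwt_r[of j n] n s by simp
      show "j < n \<Longrightarrow> rlbwt (E j n) \<noteq> rlbwt (E n n)"
        using E_sum rlbwt_ne by metis
    qed
    thus "1/36 * sqrt (real n) \<le> real (nqueries A)" by simp
  qed simp
next
  show "\<exists>\<delta> c N. 0 < \<delta> \<and> 0 < c \<and> (\<forall>n \<ge> N. \<forall>\<sigma> \<ge> n. \<forall>A :: (nat \<times> nat) list qalg.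
       computes n \<sigma> A rlbwt {T \<in> texts \<sigma> n. \<delta> * real n \<le> real (bwt_r T)}
       \<longrightarrow> c * real n \<le> real (nqueries A))"
  proof (rule exI[of _ "1/2::real"], rule exI[of _ "1/108::real"], rule exI[of _ "4::nat"], intro conjI allI impI)
    fix n \<sigma> :: nat and A :: "(nat \<times> nat) list qalg"
    assume n: "4 \<le> n" and s: "n \<le> \<sigma>"
      and comp: "computes n \<sigma> A rlbwt {T \<in> texts \<sigma> n. 1/2 * real n \<le> real (bwt_r T)}"
    have "real (n div 2) / 36 \<le> real (nqueries A)"
    proof (rule cube_lb[OF comp n s])
      show "Fc n \<subseteq> {T \<in> texts \<sigma> n. 1/2 * real n \<le> real (bwt_r T)}"
      proof
        fix T assume T: "T \<in> Fc n"
        have "(n + 1) div 2 \<le> bwt_r T" using Fc_card_set[OF T] bwt_r_ge[of T] by simp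
        hence "1/2 * real n \<le> real (bwt_r T)" using half_le[of n] by linarith
        thus "T \<in> {T \<in> texts \<sigma> n. 1/2 * real n \<le> real (bwt_r T)}" using Fc_texts[OF n s] T by auto
      qed
      fix T j
      show "T \<in> Fc n \<Longrightarrow> j < n \<Longrightarrow> odd j \<Longrightarrow> rlbwt T \<noteq> rlbwt (flip j T)"
        using flip_sum rlbwt_ne by metis
    qed
    thus "1/108 * real n \<le> real (nqueries A)" using third_le[OF n] by simp
  qed simp_all
qed

end
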